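(* Let $\mathfrak{P}$ be a nonempty compact set of probability distributions $P=(p_\omega)_{\omega\in\Omega}$ on $\Omega$ and $\Phi_R(\mathbf{x})=\min_{P\in\mathfrak{P}}\sum_{\omega\in\Omega}p_\omega Q_\omega(\mathbf{x})$. Let $\hat{\mathbf{x}}\in\mathcal{X}$ and for each $\omega\in\Omega$ let $\hat{\mathbf{S}}^\omega$ be an optimal solution of the problem defining $Q_\omega(\hat{\mathbf{x}})$; set $\hat y^\omega_{q,i}=1$ if $i\in\hat S^\omega_q$ and $\hat y^\omega_{q,i}=0$ otherwise. Then for every $\mathbf{x}\in\mathcal{X}$, $$\Phi_R(\mathbf{x})\;\ge\;\Phi_R(\hat{\mathbf{x}})-\sum_{q=1}^k\sum_{i\in N}\Big(\max_{P\in\mathfrak{P}}\sum_{\omega\in\Omega}p_\omega\,\rho^\omega_{q,i}(\boldsymbol{\emptyset})\,\hat y^\omega_{q,i}\,\xi^\omega_i\Big)x_{q,i}.$$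
   Context: Let $n,k$ be positive integers and $N=\{1,\dots,n\}$. $\mathbb{X}(N,k)$ denotes the set of $k$-tuples $\mathbf{S}=(S_1,\dots,S_k)$ of pairwise disjoint subsets of $N$; such a tuple is identified with $\mathbf{s}\in\{0,1\}^{kn}$ where $s_{q,i}=1$ iff $i\in S_q$. For $\mathbf{X},\mathbf{Y}\in\mathbb{X}(N,k)$ let $\mathbf{X}\sqcap\mathbf{Y}=(X_1\cap Y_1,\dots,X_k\cap Y_k)$ and $\mathbf{X}\sqcup\mathbf{Y}$ be the tuple whose $i$-th component is $(X_i\cup Y_i)\setminus\bigcup_{q\ne i}(X_q\cup Y_q)$. A function $f:\mathbb{X}(N,k)\to\mathbb{R}$ is $k$-submodular if $f(\mathbf{X})+f(\mathbf{Y})\ge f(\mathbf{X}\sqcap\mathbf{Y})+f(\mathbf{X}\sqcup\mathbf{Y})$ for all $\mathbf{X},\mathbf{Y}$, and monotone if $f(\mathbf{X})\le f(\mathbf{Y})$ whenever $X_q\subseteq Y_q$ for all $q$. $\boldsymbol{\emptyset}=(\emptyset,\dots,\emptyset)$. Given nonnegative integer budgets $A_1,\dots,A_k$ and $D_1,\dots,D_k$, the attacker's feasible set is $\mathcal{X}=\{\mathbf{x}\in\{0,1\}^{kn}:\sum_{i=1}^n x_{q,i}\le A_q\ \forall q,\ \sum_{q=1}^k x_{q,i}\le 1\ \forall i\in N\}$. Stochastic setting: $\Omega$ is a finite set of scenarios; for each $\omega\in\Omega$ we are given $\xi^\omega\in\{0,1\}^n$ and a monotone $k$-submodular function $f^\omega:\mathbb{X}(N,k)\to\mathbb{R}$,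 with marginal gains $\rho^\omega_{q,i}(\mathbf{X})=f^\omega(X_1,\dots,X_q\cup\{i\},\dots,X_k)-f^\omega(\mathbf{X})$ for $i\notin\bigcup_r X_r$. For $\mathbf{x}\in\mathcal{X}$, $Q_\omega(\mathbf{x})=\max\{f^\omega(\mathbf{S}):\mathbf{S}\in\mathbb{X}(N,k),\ s_{q,i}\le 1-x_{q,i}\xi^\omega_i\ \forall q,i,\ \sum_{i=1}^n s_{q,i}\le D_q\ \forall q\}$. *)

theory Defs
  imports "HOL-Analysis.Analysis"
begin

text \<open>A k-tuple of subsets of N = {1..n} is a function S :: nat => nat set, where
  S q is the q-th component for q in {1..k}, and S q = {} for q outside {1..k}.\<close>

type_synonym ktuple = "nat \<Rightarrow> nat set"

definition ktuples :: "nat \<Rightarrow> nat \<Rightarrow> ktuple set" where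
  "ktuples n k = {S. (\<forall>q. q \<notin> {1..k} \<longrightarrow> S q = {}) \<and>
                     (\<forall>q\<in>{1..k}. S q \<subseteq> {1..n}) \<and>
                     (\<forall>q\<in>{1..k}. \<forall>r\<in>{1..k}. q \<noteq> r \<longrightarrow> S q \<inter> S r = {})}"

definition kempty :: ktuple where
  "kempty = (\<lambda>q. {})"

definition kmeet :: "ktuple \<Rightarrow> ktuple \<Rightarrow> ktuple" where
  "kmeet X Y = (\<lambda>q. X q \<inter> Y q)"

definition kjoin :: "nat \<Rightarrow> ktuple \<Rightarrow> ktuple \<Rightarrow> ktuple" where
  "kjoin k X Y = (\<lambda>q. (X q \<union> Y q) - (\<Union>r\<in>{1..k} - {q}. X r \<union> Y r))"

definition k_submodular :: "nat \<Rightarrow> nat \<Rightarrow> (ktuple \<Rightarrow> real) \<Rightarrow> bool" where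
  "k_submodular n k f \<longleftrightarrow> (\<forall>X\<in>ktuples n k. \<forall>Y\<in>ktuples n k.
      f X + f Y \<ge> f (kmeet X Y) + f (kjoin k X Y))"

definition k_monotone :: "nat \<Rightarrow> nat \<Rightarrow> (ktuple \<Rightarrow> real) \<Rightarrow> bool" where
  "k_monotone n k f \<longleftrightarrow> (\<forall>X\<in>ktuples n k. \<forall>Y\<in>ktuples n k.
      (\<forall>q\<in>{1..k}. X q \<subseteq> Y q) \<longrightarrow> f X \<le> f Y)"

definition marginal :: "(ktuple \<Rightarrow> real) \<Rightarrow> nat \<Rightarrow> nat \<Rightarrow> ktuple \<Rightarrow> real" where
  "marginal f q i X = f (X(q := insert i (X q))) - f X"

definition attacker_feasible :: "nat \<Rightarrow> nat \<Rightarrow> (nat \<Rightarrow> nat) \<Rightarrow> (nat \<Rightarrow> nat \<Rightarrow> real) \<Rightarrow> bool" where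
  "attacker_feasible n k A x \<longleftrightarrow>
     (\<forall>q\<in>{1..k}. \<forall>i\<in>{1..n}. x q i \<in> {0, 1}) \<and>
     (\<forall>q\<in>{1..k}. (\<Sum>i\<in>{1..n}. x q i) \<le> real (A q)) \<and>
     (\<forall>i\<in>{1..n}. (\<Sum>q\<in>{1..k}. x q i) \<le> 1)"

definition defender_feasible :: "nat \<Rightarrow> nat \<Rightarrow> (nat \<Rightarrow> nat) \<Rightarrow> (nat \<Rightarrow> real)
      \<Rightarrow> (nat \<Rightarrow> nat \<Rightarrow> real) \<Rightarrow> ktuple set" where
  "defender_feasible n k D xi x = {S \<in> ktuples n k.
      (\<forall>q\<in>{1..k}. \<forall>i\<in>{1..n}. (if i \<in> S q then 1 else 0) \<le> 1 - x q i * xi i) \<and>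
      (\<forall>q\<in>{1..k}. card (S q) \<le> D q)}"

definition Qval :: "nat \<Rightarrow> nat \<Rightarrow> (nat \<Rightarrow> nat) \<Rightarrow> (nat \<Rightarrow> real) \<Rightarrow> (ktuple \<Rightarrow> real)
      \<Rightarrow> (nat \<Rightarrow> nat \<Rightarrow> real) \<Rightarrow> real" where
  "Qval n k D xi f x = Max (f ` defender_feasible n k D xi x)"

definition prob_dist :: "real ^ 'w::finite \<Rightarrow> bool" where
  "prob_dist P \<longleftrightarrow> (\<forall>w. P $ w \<ge> 0) \<and> (\<Sum>w\<in>UNIV. P $ w) = 1"

text \<open>Robust value Phi_R(x) = min over P of the expected recourse value;
  the minimum exists since the ambiguity set is compact and nonempty.\<close>
definition PhiR :: "(real ^ 'w::finite) set \<Rightarrow> nat \<Rightarrow> nat \<Rightarrow> (nat \<Rightarrow> nat)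
      \<Rightarrow> ('w \<Rightarrow> nat \<Rightarrow> real) \<Rightarrow> ('w \<Rightarrow> ktuple \<Rightarrow> real) \<Rightarrow> (nat \<Rightarrow> nat \<Rightarrow> real) \<Rightarrow> real" where
  "PhiR \<PP> n k D xi f x = (INF P\<in>\<PP>. \<Sum>w\<in>UNIV. P $ w * Qval n k D (xi w) (f w) x)"

end

theory Submission
  imports Defs
begin

lemma finite_ktuples: "finite (ktuples n k)"
proof -
  have "ktuples n k \<subseteq> (\<lambda>h q. if q \<in> {1..k} then h q else {}) ` (PiE {1..k} (\<lambda>_. Pow {1..n}))"
  proof
    fix S assume S: "S \<in> ktuples n k"
    hence "restrict S {1..k} \<in> PiE {1..k} (\<lambda>_. Pow {1..n})" by (auto simp: ktuples_def)
    moreover have "S = (\<lambda>q. if q\<in>{1..k} then restrict S {1..k} q else {})"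
      using S by (force simp: ktuples_def fun_eq_iff)
    ultimately show "S \<in> (\<lambda>h q. if q \<in> {1..k} then h q else {}) ` (PiE {1..k} (\<lambda>_. Pow {1..n}))" by blast
  qed
  thus ?thesis by (rule finite_subset) (intro finite_imageI finite_PiE; simp)
qed

lemma jlem:
  assumes X: "X \<in> ktuples n k" and q: "q \<in> {1..k}" and ni: "\<forall>r\<in>{1..k}. i \<notin> X r"
  shows "kjoin k (kempty(q := {i})) X = X(q := insert i (X q))"
proof (rule ext)
  fix r
  have d: "\<forall>a\<in>{1..k}. \<forall>b\<in>{1..k}. a\<noteq>b \<longrightarrow> X a \<inter> X b = {}" and o: "\<forall>a. a\<notin>{1..k} \<longrightarrow> X a = {}"
    using X unfolding ktuples_def by auto
  have U: "(\<Union>r'\<in>{1..k}-{r}. (kempty(q:={i})) r' \<union> X r') = (\<Union>r'\<in>{1..k}-{r}. X r') \<union> (if q \<in> {1..k}-{r} then {i} else {})"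
    by (auto simp: kempty_def split: if_splits)
  have kj: "kjoin k (kempty(q := {i})) X r = ((kempty(q:={i})) r \<union> X r) - ((\<Union>r'\<in>{1..k}-{r}. X r') \<union> (if q \<in> {1..k}-{r} then {i} else {}))"
    unfolding kjoin_def U ..
  show "kjoin k (kempty(q := {i})) X r = (X(q := insert i (X q))) r"
  proof (cases "r = q")
    case True
    have "(insert i (X q)) \<inter> (\<Union>r'\<in>{1..k}-{q}. X r') = {}" using d ni q by blast
    thus ?thesis unfolding kj using True by (auto simp: kempty_def)
  next
    case False
    show ?thesis
    proof (cases "r \<in> {1..k}")
      case True
      have "X r \<inter> (\<Union>r'\<in>{1..k}-{r}. X r') = {}" using d True by blast
      moreover have "i \<notin> X r" using ni True by blast
      ultimately show ?thesis unfolding kj using False q by (auto simp: kempty_def)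
    next
      case f2: False
      thus ?thesis unfolding kj using False o by (auto simp: kempty_def)
    qed
  qed
qed

lemma dimret:
  assumes sub: "k_submodular n k g" and X: "X \<in> ktuples n k" and q: "q \<in> {1..k}"
    and i: "i \<in> {1..n}" and ni: "\<forall>r\<in>{1..k}. i \<notin> X r"
  shows "marginal g q i X \<le> marginal g q i kempty"
proof -
  let ?E = "kempty(q := {i})"
  have E: "?E \<in> ktuples n k" using q i by (auto simp: ktuples_def kempty_def)
  have m: "kmeet ?E X = kempty" using ni q by (auto simp: kmeet_def kempty_def fun_eq_iff)
  have j: "kjoin k ?E X = X(q := insert i (X q))"
    using jlem[OF X q ni] .
  have "g ?E + g X \<ge> g (kmeet ?E X) + g (kjoin k ?E X)" using sub E X unfolding k_submodular_def by blast
  thus ?thesis unfolding marginal_def m j by (simp add: kempty_def)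
qed

definition addp :: "ktuple \<Rightarrow> (nat \<times> nat) set \<Rightarrow> ktuple" where
  "addp Z E = (\<lambda>r. Z r \<union> {i. (r,i) \<in> E})"

lemma addp_kt:
  assumes Z: "Z \<in> ktuples n k" and Es: "E \<subseteq> {1..k}\<times>{1..n}"
    and d: "\<forall>q i q'. (q,i)\<in>E \<longrightarrow> (q',i)\<in>E \<longrightarrow> q=q'"
    and nz: "\<forall>q i r. (q,i)\<in>E \<longrightarrow> r\<in>{1..k} \<longrightarrow> i \<notin> Z r"
  shows "addp Z E \<in> ktuples n k"
  unfolding ktuples_def addp_def
proof (intro CollectI conjI allI ballI impI)
  fix q assume "q \<notin> {1..k}" thus "Z q \<union> {i. (q, i) \<in> E} = {}" using Z Es unfolding ktuples_def by blast
next
  fix q assume "q \<in> {1..k}" thus "Z q \<union> {i. (q, i) \<in> E} \<subseteq> {1..n}" using Z Es unfolding ktuples_def by blast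
next
  fix q r assume q: "q \<in> {1..k}" and r: "r \<in> {1..k}" and qr: "q \<noteq> r"
  have "Z q \<inter> Z r = {}" using Z q r qr unfolding ktuples_def by blast
  moreover have "Z q \<inter> {i. (r, i) \<in> E} = {}" using nz q by blast
  moreover have "Z r \<inter> {i. (q, i) \<in> E} = {}" using nz r by blast
  moreover have "{i. (q, i) \<in> E} \<inter> {i. (r, i) \<in> E} = {}" using d qr by blast
  ultimately show "(Z q \<union> {i. (q, i) \<in> E}) \<inter> (Z r \<union> {i. (r, i) \<in> E}) = {}" by blast
qed

lemma tele:
  assumes sub: "k_submodular n k g" and fin: "finite E"
    and "Z \<in> ktuples n k" "E \<subseteq> {1..k}\<times>{1..n}"
    "\<forall>q i q'. (q,i)\<in>E \<longrightarrow> (q',i)\<in>E \<longrightarrow> q=q'"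
    "\<forall>q i r. (q,i)\<in>E \<longrightarrow> r\<in>{1..k} \<longrightarrow> i \<notin> Z r"
  shows "g (addp Z E) \<le> g Z + (\<Sum>e\<in>E. marginal g (fst e) (snd e) kempty)"
  using fin assms(3-)
proof (induction E rule: finite_induct)
  case empty
  then show ?case by (simp add: addp_def)
next
  case (insert e E)
  obtain q i where e: "e = (q,i)" by fastforce
  have P2: "E \<subseteq> {1..k}\<times>{1..n}" using insert.prems(2) by blast
  have P3: "\<forall>q i q'. (q,i)\<in>E \<longrightarrow> (q',i)\<in>E \<longrightarrow> q=q'" using insert.prems(3) by blast
  have P4: "\<forall>q i r. (q,i)\<in>E \<longrightarrow> r\<in>{1..k} \<longrightarrow> i \<notin> Z r" using insert.prems(4) by blast
  have IH: "g (addp Z E) \<le> g Z + (\<Sum>e\<in>E. marginal g (fst e) (snd e) kempty)"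
    using insert.IH[OF insert.prems(1) P2 P3 P4] .
  have eq: "addp Z (insert e E) = (addp Z E)(q := insert i (addp Z E q))"
    by (auto simp: addp_def fun_eq_iff e)
  have kt: "addp Z E \<in> ktuples n k" using addp_kt[OF insert.prems(1) P2 P3 P4] .
  have qi: "q \<in> {1..k}" "i \<in> {1..n}" using insert.prems(2) e by auto
  have ni: "\<forall>r\<in>{1..k}. i \<notin> addp Z E r"
  proof
    fix r assume r: "r \<in> {1..k}"
    have "i \<notin> Z r" using insert.prems(4) e r by blast
    moreover have "(r,i) \<notin> E"
    proof
      assume "(r,i) \<in> E"
      moreover have "(q,i) \<in> insert e E" using e by simp
      ultimately have "r = q" using insert.prems(3) by blast
      with \<open>(r,i) \<in> E\<close> e insert.hyps(2) show False by simp
    qed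
    ultimately show "i \<notin> addp Z E r" by (simp add: addp_def)
  qed
  have "marginal g q i (addp Z E) \<le> marginal g q i kempty"
    using dimret[OF sub kt qi ni] .
  hence "g (addp Z (insert e E)) \<le> g (addp Z E) + marginal g q i kempty"
    unfolding eq marginal_def by simp
  with IH show ?case using insert(1,2) e by simp
qed

lemma scen:
  assumes sub: "k_submodular n k g"
    and S: "S \<in> defender_feasible n k D xv xh"
    and xv01: "\<forall>i\<in>{1..n}. xv i \<in> {0,1}"
    and x: "attacker_feasible n k A x"
  shows "g S - (\<Sum>q\<in>{1..k}. \<Sum>i\<in>{1..n}. marginal g q i kempty * (if i \<in> S q then 1 else 0) * xv i * x q i)
     \<le> Qval n k D xv g x"
proof -
  have Skt: "S \<in> ktuples n k" and Scard: "\<forall>q\<in>{1..k}. card (S q) \<le> D q"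
    using S by (auto simp: defender_feasible_def)
  have x01: "\<forall>q\<in>{1..k}. \<forall>i\<in>{1..n}. x q i \<in> {0,1}" using x by (simp add: attacker_feasible_def)
  define S' where "S' = (\<lambda>r. S r - {i. x r i * xv i = 1})"
  define R where "R = {(q,i). q\<in>{1..k} \<and> i \<in> S q \<and> x q i * xv i = 1}"
  have S'kt: "S' \<in> ktuples n k" using Skt unfolding ktuples_def S'_def by blast
  have S'feas: "S' \<in> defender_feasible n k D xv x"
    unfolding defender_feasible_def
  proof (rule CollectI, intro conjI S'kt ballI)
    fix q i assume q: "q \<in> {1..k}" and i: "i \<in> {1..n}"
    have "x q i = 0 \<or> x q i = 1" "xv i = 0 \<or> xv i = 1" using x01 xv01 q i by auto
    thus "(if i \<in> S' q then 1 else 0) \<le> 1 - x q i * xv i"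
      by (auto simp: S'_def)
  next
    fix q assume q: "q \<in> {1..k}"
    have "S q \<subseteq> {1..n}" using Skt q unfolding ktuples_def by blast
    hence "finite (S q)" by (rule finite_subset) simp
    hence "card (S' q) \<le> card (S q)" by (intro card_mono) (auto simp: S'_def)
    thus "card (S' q) \<le> D q" using Scard q by force
  qed
  have SR: "S = addp S' R"
  proof (rule ext)
    fix r
    show "S r = addp S' R r"
    proof (cases "r \<in> {1..k}")
      case True
      thus ?thesis unfolding addp_def S'_def R_def by auto
    next
      case False
      hence "S r = {}" using Skt unfolding ktuples_def by blast
      thus ?thesis using False unfolding addp_def S'_def R_def by auto
    qed
  qed
  have Sd: "\<forall>a\<in>{1..k}. \<forall>b\<in>{1..k}. a\<noteq>b \<longrightarrow> S a \<inter> S b = {}"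
    and Ssub: "\<forall>a\<in>{1..k}. S a \<subseteq> {1..n}" using Skt unfolding ktuples_def by auto
  have Rsub: "R \<subseteq> {1..k}\<times>{1..n}" unfolding R_def using Ssub by blast
  have finR: "finite R" using Rsub by (rule finite_subset) simp
  have "g S \<le> g S' + (\<Sum>e\<in>R. marginal g (fst e) (snd e) kempty)"
    unfolding SR
  proof (rule tele[OF sub finR S'kt Rsub])
    show "\<forall>q i q'. (q,i)\<in>R \<longrightarrow> (q',i)\<in>R \<longrightarrow> q=q'"
      unfolding R_def using Sd by blast
    show "\<forall>q i r. (q,i)\<in>R \<longrightarrow> r\<in>{1..k} \<longrightarrow> i \<notin> S' r"
    proof (intro allI impI)
      fix q i r assume qi: "(q,i) \<in> R" and r: "r \<in> {1..k}"
      hence q: "q\<in>{1..k}" and iS: "i \<in> S q" and one: "x q i * xv i = 1" by (auto simp: R_def)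
      show "i \<notin> S' r"
      proof (cases "r = q")
        case True
        thus ?thesis using one by (simp add: S'_def)
      next
        case False
        hence "S q \<inter> S r = {}" using Sd q r by blast
        thus ?thesis using iS by (auto simp: S'_def)
      qed
    qed
  qed
  also have "(\<Sum>e\<in>R. marginal g (fst e) (snd e) kempty)
      = (\<Sum>q\<in>{1..k}. \<Sum>i\<in>{1..n}. marginal g q i kempty * (if i \<in> S q then 1 else 0) * xv i * x q i)"
  proof -
    have "(\<Sum>e\<in>R. marginal g (fst e) (snd e) kempty)
        = (\<Sum>e\<in>{1..k}\<times>{1..n}. if e \<in> R then marginal g (fst e) (snd e) kempty else 0)"
      using Rsub by (simp add: sum.inter_restrict[symmetric] Int_absorb1)
    also have "\<dots> = (\<Sum>(q,i)\<in>{1..k}\<times>{1..n}. marginal g q i kempty * (if i \<in> S q then 1 else 0) * xv i * x q i)"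
    proof (rule sum.cong[OF refl])
      fix e assume "e \<in> {1..k}\<times>{1..n}"
      then obtain q i where e: "e = (q,i)" "q\<in>{1..k}" "i\<in>{1..n}" by auto
      show "(if e \<in> R then marginal g (fst e) (snd e) kempty else 0) =
          (case e of (q,i) \<Rightarrow> marginal g q i kempty * (if i \<in> S q then 1 else 0) * xv i * x q i)"
      proof -
        have h: "x q i = 0 \<or> x q i = 1" "xv i = 0 \<or> xv i = 1" using x01 xv01 e by auto
        show ?thesis using h e by (cases "x q i = 0"; cases "xv i = 0") (auto simp: R_def)
      qed
    qed
    also have "\<dots> = (\<Sum>q\<in>{1..k}. \<Sum>i\<in>{1..n}. marginal g q i kempty * (if i \<in> S q then 1 else 0) * xv i * x q i)"
      by (simp add: sum.cartesian_product)
    finally show ?thesis .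
  qed
  finally have 1: "g S \<le> g S' + (\<Sum>q\<in>{1..k}. \<Sum>i\<in>{1..n}. marginal g q i kempty * (if i \<in> S q then 1 else 0) * xv i * x q i)" .
  have "finite (defender_feasible n k D xv x)"
    by (rule finite_subset[OF _ finite_ktuples[of n k]]) (auto simp: defender_feasible_def)
  hence "g S' \<le> Qval n k D xv g x" unfolding Qval_def using S'feas by (intro Max_ge) auto
  with 1 show ?thesis by linarith
qed

lemma pd_bound:
  fixes P :: "real ^ 'w::finite"
  assumes "prob_dist P"
  shows "\<bar>\<Sum>w\<in>UNIV. P $ w * g w\<bar> \<le> (\<Sum>w\<in>UNIV. \<bar>g w\<bar>)"
proof -
  have le1: "P $ w \<le> 1" for w
  proof -
    have "P $ w \<le> (\<Sum>w\<in>UNIV. P $ w)" using assms by (intro member_le_sum) (auto simp: prob_dist_def)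
    thus ?thesis using assms by (simp add: prob_dist_def)
  qed
  have "\<bar>\<Sum>w\<in>UNIV. P $ w * g w\<bar> \<le> (\<Sum>w\<in>UNIV. \<bar>P $ w * g w\<bar>)" by (rule sum_abs)
  also have "\<dots> \<le> (\<Sum>w\<in>UNIV. \<bar>g w\<bar>)"
  proof (rule sum_mono)
    fix w
    have "0 \<le> P $ w" using assms by (simp add: prob_dist_def)
    thus "\<bar>P $ w * g w\<bar> \<le> \<bar>g w\<bar>" using le1[of w]
      by (simp add: abs_mult mult_left_le_one_le)
  qed
  finally show ?thesis .
qed

theorem theorem4:
  fixes n k :: nat
    and A D :: "nat \<Rightarrow> nat"
    and xi :: "'w::finite \<Rightarrow> nat \<Rightarrow> real"
    and f :: "'w \<Rightarrow> ktuple \<Rightarrow> real"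
    and \<PP> :: "(real ^ 'w) set"
    and xhat x :: "nat \<Rightarrow> nat \<Rightarrow> real"
    and Shat :: "'w \<Rightarrow> ktuple"
  assumes "n \<ge> 1" and "k \<ge> 1"
    and xi01: "\<forall>w. \<forall>i\<in>{1..n}. xi w i \<in> {0, 1}"
    and fsub: "\<forall>w. k_submodular n k (f w)"
    and fmono: "\<forall>w. k_monotone n k (f w)"
    and Pne: "\<PP> \<noteq> {}" and Pcomp: "compact \<PP>"
    and Pdist: "\<forall>P\<in>\<PP>. prob_dist P"
    and xhat: "attacker_feasible n k A xhat"
    and Shat_opt: "\<forall>w. Shat w \<in> defender_feasible n k D (xi w) xhat \<and>
                       f w (Shat w) = Qval n k D (xi w) (f w) xhat"
    and x: "attacker_feasible n k A x"
  shows "PhiR \<PP> n k D xi f x \<ge> PhiR \<PP> n k D xi f xhat -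
     (\<Sum>q\<in>{1..k}. \<Sum>i\<in>{1..n}.
        (SUP P\<in>\<PP>. \<Sum>w\<in>UNIV. P $ w * marginal (f w) q i kempty
                      * (if i \<in> Shat w q then 1 else 0) * xi w i) * x q i)"
proof -
  define c where "c q i w = marginal (f w) q i kempty * (if i \<in> Shat w q then 1 else 0) * xi w i" for q i w
  define Qx where "Qx w = Qval n k D (xi w) (f w) x" for w
  define Qh where "Qh w = Qval n k D (xi w) (f w) xhat" for w
  have x01: "\<forall>q\<in>{1..k}. \<forall>i\<in>{1..n}. x q i \<in> {0,1}" using x by (simp add: attacker_feasible_def)
  have sc: "Qh w - (\<Sum>q\<in>{1..k}. \<Sum>i\<in>{1..n}. c q i w * x q i) \<le> Qx w" for w
    using scen[OF spec[OF fsub, of w] conjunct1[OF spec[OF Shat_opt, of w]] spec[OF xi01, of w] x]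
      Shat_opt unfolding c_def Qx_def Qh_def by simp
  have body: "(\<Sum>w\<in>UNIV. P $ w * marginal (f w) q i kempty * (if i \<in> Shat w q then 1 else 0) * xi w i)
      = (\<Sum>w\<in>UNIV. P $ w * c q i w)" for P q i by (simp add: c_def mult.assoc)
  have bddA: "bdd_above ((\<lambda>P. \<Sum>w\<in>UNIV. P $ w * c q i w) ` \<PP>)" for q i
  proof (rule bdd_aboveI2)
    fix P assume "P \<in> \<PP>"
    thus "(\<Sum>w\<in>UNIV. P $ w * c q i w) \<le> (\<Sum>w\<in>UNIV. \<bar>c q i w\<bar>)"
      using pd_bound[of P "c q i"] Pdist by fastforce
  qed
  have bddB: "bdd_below ((\<lambda>P. \<Sum>w\<in>UNIV. P $ w * Qh w) ` \<PP>)"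
  proof (rule bdd_belowI2)
    fix P assume "P \<in> \<PP>"
    thus "- (\<Sum>w\<in>UNIV. \<bar>Qh w\<bar>) \<le> (\<Sum>w\<in>UNIV. P $ w * Qh w)"
      using pd_bound[of P Qh] Pdist by fastforce
  qed
  show ?thesis
    unfolding PhiR_def body Qx_def[symmetric] Qh_def[symmetric]
  proof (rule cINF_greatest[OF Pne])
    fix P assume P: "P \<in> \<PP>"
    have Pnn: "\<forall>w. P $ w \<ge> 0" using Pdist P by (simp add: prob_dist_def)
    have e1: "(\<Sum>w\<in>UNIV. P $ w * (\<Sum>q\<in>{1..k}. \<Sum>i\<in>{1..n}. c q i w * x q i))
        = (\<Sum>q\<in>{1..k}. \<Sum>i\<in>{1..n}. (\<Sum>w\<in>UNIV. P $ w * c q i w) * x q i)"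
    proof -
      have "(\<Sum>w\<in>UNIV. P $ w * (\<Sum>q\<in>{1..k}. \<Sum>i\<in>{1..n}. c q i w * x q i))
          = (\<Sum>w\<in>UNIV. \<Sum>q\<in>{1..k}. \<Sum>i\<in>{1..n}. P $ w * c q i w * x q i)"
        by (simp add: sum_distrib_left mult.assoc)
      also have "\<dots> = (\<Sum>q\<in>{1..k}. \<Sum>w\<in>UNIV. \<Sum>i\<in>{1..n}. P $ w * c q i w * x q i)"
        by (rule sum.swap)
      also have "\<dots> = (\<Sum>q\<in>{1..k}. \<Sum>i\<in>{1..n}. \<Sum>w\<in>UNIV. P $ w * c q i w * x q i)"
        by (rule sum.cong[OF refl], rule sum.swap)
      also have "\<dots> = (\<Sum>q\<in>{1..k}. \<Sum>i\<in>{1..n}. (\<Sum>w\<in>UNIV. P $ w * c q i w) * x q i)"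
        by (simp add: sum_distrib_right)
      finally show ?thesis .
    qed
    have "(\<Sum>w\<in>UNIV. P $ w * Qh w) - (\<Sum>q\<in>{1..k}. \<Sum>i\<in>{1..n}. (\<Sum>w\<in>UNIV. P $ w * c q i w) * x q i)
        = (\<Sum>w\<in>UNIV. P $ w * (Qh w - (\<Sum>q\<in>{1..k}. \<Sum>i\<in>{1..n}. c q i w * x q i)))"
      by (simp only: right_diff_distrib sum_subtractf e1)
    also have "\<dots> \<le> (\<Sum>w\<in>UNIV. P $ w * Qx w)"
      by (rule sum_mono) (intro mult_left_mono sc Pnn[rule_format])
    finally have 1: "(\<Sum>w\<in>UNIV. P $ w * Qh w) - (\<Sum>q\<in>{1..k}. \<Sum>i\<in>{1..n}. (\<Sum>w\<in>UNIV. P $ w * c q i w) * x q i)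
        \<le> (\<Sum>w\<in>UNIV. P $ w * Qx w)" .
    have 2: "(INF P\<in>\<PP>. \<Sum>w\<in>UNIV. P $ w * Qh w) \<le> (\<Sum>w\<in>UNIV. P $ w * Qh w)"
      by (rule cINF_lower[OF bddB P])
    have 3: "(\<Sum>q\<in>{1..k}. \<Sum>i\<in>{1..n}. (\<Sum>w\<in>UNIV. P $ w * c q i w) * x q i)
        \<le> (\<Sum>q\<in>{1..k}. \<Sum>i\<in>{1..n}. (SUP P\<in>\<PP>. \<Sum>w\<in>UNIV. P $ w * c q i w) * x q i)"
    proof (intro sum_mono mult_right_mono)
      fix q i assume "q \<in> {1..k}" "i \<in> {1..n}"
      hence "x q i \<in> {0,1}" using x01 by blast
      thus "0 \<le> x q i" by auto
    next
      fix q i show "(\<Sum>w\<in>UNIV. P $ w * c q i w) \<le> (SUP P\<in>\<PP>. \<Sum>w\<in>UNIV. P $ w * c q i w)"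
        by (rule cSUP_upper[OF P bddA])
    qed
    show "(INF P\<in>\<PP>. \<Sum>w\<in>UNIV. P $ w * Qh w) -
        (\<Sum>q\<in>{1..k}. \<Sum>i\<in>{1..n}. (SUP P\<in>\<PP>. \<Sum>w\<in>UNIV. P $ w * c q i w) * x q i)
        \<le> (\<Sum>w\<in>UNIV. P $ w * Qx w)"
      using 1 2 3 by linarith
  qed
qed

end
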